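(* Let $G$ be a connected cograph which is $k$-connected, and let $S$ be a minimal vertex separator of $G$ with $|S|=k$, so that $G\setminus S$ has connected components $G_1,\ldots,G_m$ with $m\geq 2$. Then every vertex $x\in S$ is adjacent to every vertex of $V(G)\setminus S$.
   Context: A cograph is a graph that can be built from single vertices by repeatedly taking disjoint unions and joins; equivalently, a graph with no induced path on four vertices. Graphs are finite, simple, undirected. $G\setminus S$ is the subgraph induced on $V(G)\setminus S$. A vertex separator of a connected graph $G$ is a set $S\subset V(G)$ such that $G\setminus S$ is disconnected; it is minimal if no proper subset of $S$ is a vertex separator; a minimum vertex separator is a minimal vertex separator of least size. The paper calls $G$ $k$-connected if there exists a minimum vertex separator of size $k$. *)

theory Defs
  imports Main
begin

definition simple_graph :: "'a set \<Rightarrow> ('a \<Rightarrow> 'a \<Rightarrow> bool) \<Rightarrow> bool" where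
  "simple_graph V E \<longleftrightarrow> finite V \<and> (\<forall>x y. E x y \<longrightarrow> x \<in> V \<and> y \<in> V)
     \<and> (\<forall>x y. E x y \<longrightarrow> E y x) \<and> (\<forall>x. \<not> E x x)"

definition reachable_in :: "('a \<Rightarrow> 'a \<Rightarrow> bool) \<Rightarrow> 'a set \<Rightarrow> 'a \<Rightarrow> 'a \<Rightarrow> bool" where
  "reachable_in E U x y \<longleftrightarrow> (\<lambda>a b. a \<in> U \<and> b \<in> U \<and> E a b)\<^sup>*\<^sup>* x y"

definition connected_on :: "('a \<Rightarrow> 'a \<Rightarrow> bool) \<Rightarrow> 'a set \<Rightarrow> bool" where
  "connected_on E U \<longleftrightarrow> U \<noteq> {} \<and> (\<forall>x\<in>U. \<forall>y\<in>U. reachable_in E U x y)"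

definition cograph :: "'a set \<Rightarrow> ('a \<Rightarrow> 'a \<Rightarrow> bool) \<Rightarrow> bool" where
  "cograph V E \<longleftrightarrow> \<not> (\<exists>a\<in>V. \<exists>b\<in>V. \<exists>c\<in>V. \<exists>d\<in>V. distinct [a,b,c,d] \<and>
      E a b \<and> E b c \<and> E c d \<and> \<not> E a c \<and> \<not> E a d \<and> \<not> E b d)"

definition vertex_separator :: "'a set \<Rightarrow> ('a \<Rightarrow> 'a \<Rightarrow> bool) \<Rightarrow> 'a set \<Rightarrow> bool" where
  "vertex_separator V E S \<longleftrightarrow> S \<subseteq> V \<and>
     (\<exists>x\<in>V - S. \<exists>y\<in>V - S. \<not> reachable_in E (V - S) x y)"

definition minimal_vertex_separator :: "'a set \<Rightarrow> ('a \<Rightarrow> 'a \<Rightarrow> bool) \<Rightarrow> 'a set \<Rightarrow> bool" where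
  "minimal_vertex_separator V E S \<longleftrightarrow> vertex_separator V E S \<and>
     (\<forall>T. T \<subset> S \<longrightarrow> \<not> vertex_separator V E T)"

definition minimum_vertex_separator :: "'a set \<Rightarrow> ('a \<Rightarrow> 'a \<Rightarrow> bool) \<Rightarrow> 'a set \<Rightarrow> bool" where
  "minimum_vertex_separator V E S \<longleftrightarrow> minimal_vertex_separator V E S \<and>
     (\<forall>T. minimal_vertex_separator V E T \<longrightarrow> card S \<le> card T)"

text \<open>The paper's notion: G is k-connected if it has a minimum vertex separator of size k.\<close>
definition k_connected :: "'a set \<Rightarrow> ('a \<Rightarrow> 'a \<Rightarrow> bool) \<Rightarrow> nat \<Rightarrow> bool" where
  "k_connected V E k \<longleftrightarrow> (\<exists>S. minimum_vertex_separator V E S \<and> card S = k)"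

end

theory Submission
  imports Defs
begin

lemma reach_sym:
  assumes sym: "\<forall>x y. E x y \<longrightarrow> E y x" and r: "reachable_in E U a b"
  shows "reachable_in E U b a"
proof -
  have "symp (\<lambda>a b. a \<in> U \<and> b \<in> U \<and> E a b)"
    using sym by (auto intro: sympI)
  then show ?thesis using r unfolding reachable_in_def
    by (meson sympD symp_rtranclp)
qed

lemma reach_trans:
  "reachable_in E U a b \<Longrightarrow> reachable_in E U b c \<Longrightarrow> reachable_in E U a c"
  unfolding reachable_in_def by (rule rtranclp_trans)

lemma reach_step:
  "reachable_in E U a b \<Longrightarrow> b \<in> U \<Longrightarrow> c \<in> U \<Longrightarrow> E b c \<Longrightarrow> reachable_in E U a c"
  unfolding reachable_in_def by (erule rtranclp.rtrancl_into_rtrancl) simp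

lemma reach_refl: "reachable_in E U a a"
  unfolding reachable_in_def by simp

lemma reach_mem: "reachable_in E U a b \<Longrightarrow> a \<in> U \<Longrightarrow> b \<in> U"
  unfolding reachable_in_def by (induction rule: rtranclp.induct) auto

lemma path_to_x:
  assumes "(\<lambda>a b. a \<in> insert x W \<and> b \<in> insert x W \<and> E a b)\<^sup>*\<^sup>* u v"
    and "u \<in> W"
  shows "(\<exists>w. reachable_in E W u w \<and> E w x) \<or> (v \<in> W \<and> reachable_in E W u v)"
  using assms
proof (induction rule: rtranclp.induct)
  case (rtrancl_refl a)
  then show ?case by (auto intro: reach_refl)
next
  case (rtrancl_into_rtrancl a b c)
  then show ?case
    by (metis insertE reach_step)
qed

lemma path_leave:
  assumes "reachable_in E W w v" and "E x w" and "\<not> E x v" and "w \<in> W"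
  shows "\<exists>c1 c2. reachable_in E W w c1 \<and> c1 \<in> W \<and> c2 \<in> W \<and> E x c1 \<and> E c1 c2 \<and> \<not> E x c2"
proof -
  have "(\<lambda>a b. a \<in> W \<and> b \<in> W \<and> E a b)\<^sup>*\<^sup>* w v" using assms(1) unfolding reachable_in_def .
  then have "E x v \<or> (\<exists>c1 c2. reachable_in E W w c1 \<and> c1 \<in> W \<and> c2 \<in> W \<and> E x c1 \<and> E c1 c2 \<and> \<not> E x c2)"
  proof (induction rule: rtranclp_induct)
    case base
    then show ?case using assms(2) by simp
  next
    case (step b c)
    have rb: "reachable_in E W w b" using step(1) unfolding reachable_in_def .
    show ?case using step(2,3) rb by blast
  qed
  then show ?thesis using assms(3) by blast
qed

theorem lemma2:
  fixes V :: "'a set" and E :: "'a \<Rightarrow> 'a \<Rightarrow> bool" and S :: "'a set" and k :: nat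
  assumes "simple_graph V E"
    and "cograph V E"
    and "connected_on E V"
    and "k_connected V E k"
    and "minimal_vertex_separator V E S"
    and "card S = k"
  shows "\<forall>x\<in>S. \<forall>y\<in>V - S. E x y"
proof (intro ballI, rule ccontr)
  fix x y assume xS: "x \<in> S" and yV: "y \<in> V - S" and nxy: "\<not> E x y"
  let ?W = "V - S"
  have sym: "\<forall>x y. E x y \<longrightarrow> E y x" and inV: "\<forall>x y. E x y \<longrightarrow> x \<in> V \<and> y \<in> V"
    and irr: "\<forall>x. \<not> E x x"
    using assms(1) unfolding simple_graph_def by auto
  have sep: "vertex_separator V E S" and minS: "\<not> vertex_separator V E (S - {x})"
    using assms(5) xS unfolding minimal_vertex_separator_def by auto
  have SV: "S \<subseteq> V" using sep unfolding vertex_separator_def by auto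
  obtain a b where aW: "a \<in> ?W" and bW: "b \<in> ?W" and nab: "\<not> reachable_in E ?W a b"
    using sep unfolding vertex_separator_def by auto
  have Weq: "V - (S - {x}) = insert x ?W" using xS SV by auto
  have allr: "\<forall>u\<in>insert x ?W. \<forall>v\<in>insert x ?W. reachable_in E (insert x ?W) u v"
    using minS SV Weq unfolding vertex_separator_def by auto
  have nbr: "\<exists>w. reachable_in E ?W u w \<and> E x w" if uW: "u \<in> ?W" for u
  proof -
    have "reachable_in E (insert x ?W) u x" using allr uW by auto
    then have "(\<exists>w. reachable_in E ?W u w \<and> E w x) \<or> (x \<in> ?W \<and> reachable_in E ?W u x)"
      using path_to_x[OF _ uW] unfolding reachable_in_def by blast
    then show ?thesis using xS sym by auto
  qed
  have "\<exists>z. z \<in> ?W \<and> \<not> reachable_in E ?W y z \<and> E x z"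
  proof (cases "reachable_in E ?W y a")
    case True
    have "\<not> reachable_in E ?W y b"
      using True nab reach_trans reach_sym[OF sym] by metis
    moreover obtain z where bz: "reachable_in E ?W b z" "E x z" using nbr bW by blast
    moreover have "z \<in> ?W" using reach_mem[OF bz(1) bW] .
    moreover have "\<not> reachable_in E ?W y z"
      using reach_trans[OF _ reach_sym[OF sym bz(1)]] calculation(1) by blast
    ultimately show ?thesis by blast
  next
    case False
    obtain z where az: "reachable_in E ?W a z" "E x z" using nbr aW by blast
    moreover have "z \<in> ?W" using reach_mem[OF az(1) aW] .
    moreover have "\<not> reachable_in E ?W y z"
      using reach_trans[OF _ reach_sym[OF sym az(1)]] False by blast
    ultimately show ?thesis by blast
  qed
  then obtain z where zW: "z \<in> ?W" and nyz: "\<not> reachable_in E ?W y z" and xz: "E x z" by blast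
  obtain w where yw: "reachable_in E ?W y w" and xw: "E x w" using nbr yV by blast
  have wW: "w \<in> ?W" using reach_mem[OF yw yV] .
  obtain c1 c2 where wc1: "reachable_in E ?W w c1" and c1W: "c1 \<in> ?W" and c2W: "c2 \<in> ?W"
    and xc1: "E x c1" and c12: "E c1 c2" and nxc2: "\<not> E x c2"
    using path_leave[OF reach_sym[OF sym yw] xw nxy wW] by blast
  have yc1: "reachable_in E ?W y c1" using reach_trans[OF yw wc1] .
  have yc2: "reachable_in E ?W y c2" using reach_step[OF yc1 c1W c2W c12] .
  have nzc1: "\<not> E z c1"
    using reach_step[OF yc1 c1W zW] nyz sym by blast
  have nzc2: "\<not> E z c2"
    using reach_step[OF yc2 c2W zW] nyz sym by blast
  have "z \<noteq> c1" using yc1 nyz by auto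
  moreover have "z \<noteq> c2" using yc2 nyz by auto
  moreover have "z \<noteq> x" "x \<noteq> c1" "x \<noteq> c2" using zW c1W c2W xS by auto
  moreover have "c1 \<noteq> c2" using c12 irr by auto
  ultimately have "distinct [z, x, c1, c2]" by auto
  moreover have "z \<in> V" "x \<in> V" "c1 \<in> V" "c2 \<in> V" using zW c1W c2W xS SV by auto
  moreover have "E z x" using xz sym by auto
  moreover have "\<not> E z c1" "\<not> E z c2" "\<not> E x c2" using nzc1 nzc2 nxc2 by auto
  ultimately show False using assms(2) xc1 c12 unfolding cograph_def by blast
qed

end
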